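(* Let $X$ be a separable $\mathbb{R}$-rigid space with $|X|\ge 2$ and $G$ an infinite Abelian group. Then every Korovin orbit $G_f$ in $X^G$ is $\mathbb{R}$-rigid.
   Context: $X^G$ carries the product topology. For $f\in X^G$ and $g\in G$ let $gf\in X^G$ be given by $(gf)(x)=f(xg)$, and let $G_f=\{gf:g\in G\}\subseteq X^G$ with the subspace topology. The map $f\colon G\to X$ is a Korovin mapping if $\pi_M(G_f)=X^M$ for every countable $M\subseteq G$, where $\pi_M\colon X^G\to X^M$ is the projection; in that case $G_f$ is called a Korovin orbit. A space is $\mathbb{R}$-rigid if every continuous real-valued function on it is constant. *)

theory Defs
  imports "HOL-Analysis.Analysis"
begin

text \<open>The group G is modelled as a type of class ab_group_add (written additively),
  so (g f)(x) = f (x g) becomes (g f) x = f (x + g).\<close>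

definition shift :: "'g::ab_group_add \<Rightarrow> ('g \<Rightarrow> 'a) \<Rightarrow> ('g \<Rightarrow> 'a)" where
  "shift g f = (\<lambda>x. f (x + g))"

definition orbit :: "('g::ab_group_add \<Rightarrow> 'a) \<Rightarrow> ('g \<Rightarrow> 'a) set" where
  "orbit f = {shift g f | g. True}"

definition power_top :: "'a topology \<Rightarrow> ('g \<Rightarrow> 'a) topology" where
  "power_top X = product_topology (\<lambda>_. X) UNIV"

definition korovin_mapping :: "'a topology \<Rightarrow> ('g::ab_group_add \<Rightarrow> 'a) \<Rightarrow> bool" where
  "korovin_mapping X f \<longleftrightarrow>
     (\<forall>x. f x \<in> topspace X) \<and>
     (\<forall>M. countable M \<longrightarrow>
        (\<lambda>h. restrict h M) ` orbit f = PiE M (\<lambda>_. topspace X))"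

definition R_rigid :: "'a topology \<Rightarrow> bool" where
  "R_rigid X \<longleftrightarrow> (\<forall>h. continuous_map X euclideanreal h \<longrightarrow>
      (\<forall>x\<in>topspace X. \<forall>y\<in>topspace X. h x = h y))"

end

theory Submission
  imports Defs
begin


lemma orbit_top:
  assumes "korovin_mapping X f" "z \<in> orbit f"
  shows "z j \<in> topspace X"
  using assms by (auto simp: korovin_mapping_def orbit_def shift_def)

lemma orbit_ext:
  assumes "korovin_mapping X f" "countable M" "\<And>j. j \<in> M \<Longrightarrow> u j \<in> topspace X"
  shows "\<exists>z\<in>orbit f. \<forall>j\<in>M. z j = u j"
proof -
  have "restrict u M \<in> PiE M (\<lambda>_. topspace X)" using assms(3) by auto
  then have "restrict u M \<in> (\<lambda>h. restrict h M) ` orbit f"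
    using assms(1,2) unfolding korovin_mapping_def by blast
  then obtain z where "z \<in> orbit f" "restrict z M = restrict u M" by auto
  then show ?thesis by (metis restrict_apply')
qed

lemma dense_pt:
  assumes "countable D" "D \<subseteq> topspace X" "X closure_of D = topspace X"
    "openin X V" "V \<noteq> {}"
  shows "\<exists>d\<in>D. d \<in> V"
proof -
  have "V \<inter> X closure_of D \<noteq> {}" using assms openin_subset by fastforce
  then show ?thesis using openin_Int_closure_of_eq_empty[OF assms(4)] by blast
qed

lemma nbhd_box:
  assumes "korovin_mapping X f"
    "continuous_map (subtopology (power_top X) (orbit f)) euclideanreal h"
    "y \<in> orbit f" "open W" "h y \<in> W"
  shows "\<exists>U. (\<forall>i. openin X (U i)) \<and> finite {i. U i \<noteq> topspace X} \<and> (\<forall>i. y i \<in> U i)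
     \<and> (\<forall>z\<in>orbit f. (\<forall>i. z i \<in> U i) \<longrightarrow> h z \<in> W)"
proof -
  have sub: "orbit f \<subseteq> topspace (power_top X)"
    using orbit_top[OF assms(1)] by (auto simp: power_top_def topspace_product_topology)
  have "openin (subtopology (power_top X) (orbit f))
        {x \<in> topspace (subtopology (power_top X) (orbit f)). h x \<in> W}"
    using assms(2,4) by (simp add: continuous_map_def)
  then obtain S where S: "openin (power_top X) S"
    "{x \<in> topspace (subtopology (power_top X) (orbit f)). h x \<in> W} = S \<inter> orbit f"
    by (auto simp: openin_subtopology)
  have "y \<in> S" using S(2) assms(3,5) sub by (auto simp: topspace_subtopology)
  then obtain U where U: "finite {i. U i \<noteq> topspace X}" "\<forall>i. openin X (U i)"
    "y \<in> PiE UNIV U" "PiE UNIV U \<subseteq> S"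
    using S(1) unfolding power_top_def openin_product_topology_alt by fastforce
  show ?thesis
  proof (intro exI conjI ballI impI allI)
    show "finite {i. U i \<noteq> topspace X}" "\<And>i. openin X (U i)" using U by auto
    show "y i \<in> U i" for i using U(3) by auto
    fix z assume z: "z \<in> orbit f" "\<forall>i. z i \<in> U i"
    then have "z \<in> S" using U(4) by auto
    then show "h z \<in> W" using S(2) z(1) sub by (auto simp: topspace_subtopology)
  qed
qed



lemma construct_M:
  fixes good :: "'g set \<Rightarrow> ('g \<Rightarrow> 'a) \<Rightarrow> real \<Rightarrow> ('g \<Rightarrow> 'b) \<Rightarrow> bool"
  assumes D: "countable D"
    and fin: "\<And>E e c U. good E e c U \<Longrightarrow> finite {i. U i \<noteq> S}"
  shows "\<exists>M. countable M \<and> (\<forall>E e c. finite E \<and> E \<subseteq> M \<and> e \<in> PiE E (\<lambda>_. D) \<and> c \<in> \<rat>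
      \<and> (\<exists>U. good E e c U) \<longrightarrow> (\<exists>U. good E e c U \<and> {i. U i \<noteq> S} \<subseteq> M))"
proof -
  define sp where "sp E e c = (if \<exists>U. good E e c U then {i. (SOME U. good E e c U) i \<noteq> S} else {})" for E e c
  have spfin: "finite (sp E e c)" for E e c
    proof (cases "\<exists>U. good E e c U")
    case True then show ?thesis unfolding sp_def using fin[OF someI_ex[OF True]] by simp
  qed (simp add: sp_def)
  define nx where "nx A = A \<union> (\<Union>E\<in>{E. finite E \<and> E \<subseteq> A}. \<Union>e\<in>PiE E (\<lambda>_. D). \<Union>c\<in>\<rat>. sp E e c)" for A
  define Ms where "Ms n = (nx ^^ n) {}" for n
  define M where "M = (\<Union>n. Ms n)"
  have cnx: "countable (nx A)" if "countable A" for A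
  proof -
    have "countable (\<Union>E\<in>{E. finite E \<and> E \<subseteq> A}. \<Union>e\<in>PiE E (\<lambda>_. D). \<Union>c\<in>\<rat>. sp E e c)"
    proof (rule countable_UN[OF countable_Collect_finite_subset[OF that]])
      fix E assume "E \<in> {E. finite E \<and> E \<subseteq> A}"
      then have "finite E" by simp
      show "countable (\<Union>e\<in>PiE E (\<lambda>_. D). \<Union>c\<in>\<rat>. sp E e c)"
      proof (rule countable_UN[OF countable_PiE[OF \<open>finite E\<close> D]])
        fix e show "countable (\<Union>c\<in>\<rat>. sp E e c)"
          by (rule countable_UN[OF countable_rat countable_finite[OF spfin]])
      qed
    qed
    then show ?thesis unfolding nx_def using that by (rule countable_Un[rotated])
  qed
  have MsS: "Ms (Suc n) = nx (Ms n)" for n by (simp add: Ms_def)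
  have cMs: "countable (Ms n)" for n
  proof (induction n)
    case 0 then show ?case by (simp add: Ms_def)
  next
    case (Suc n) then show ?case unfolding MsS by (rule cnx)
  qed
  have monoS: "Ms n \<subseteq> Ms (Suc n)" for n unfolding MsS nx_def by (rule Un_upper1)
  have mono: "m \<le> n \<Longrightarrow> Ms m \<subseteq> Ms n" for m n
    using lift_Suc_mono_le[of Ms, OF monoS] by blast
  have finsub: "finite E \<Longrightarrow> E \<subseteq> M \<Longrightarrow> \<exists>n. E \<subseteq> Ms n" for E
  proof (induction E rule: finite_induct)
    case empty then show ?case by auto
  next
    case (insert x E)
    then obtain n where n: "E \<subseteq> Ms n" by auto
    obtain m where m: "x \<in> Ms m" using insert.prems M_def by auto
    have "insert x E \<subseteq> Ms (max n m)" using n m mono[of n "max n m"] mono[of m "max n m"] by auto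
    then show ?case by blast
  qed
  show ?thesis
  proof (rule exI[of _ M], intro conjI allI impI)
    show "countable M" unfolding M_def using cMs by auto
    fix E e c
    assume H: "finite E \<and> E \<subseteq> M \<and> e \<in> PiE E (\<lambda>_. D) \<and> c \<in> \<rat> \<and> (\<exists>U. good E e c U)"
    have H1: "finite E" and H2: "E \<subseteq> M" and H3: "e \<in> PiE E (\<lambda>_. D)" and H4: "c \<in> \<rat>"
      and H5: "\<exists>U. good E e c U" using H by simp_all
    obtain n where n: "E \<subseteq> Ms n" using finsub[OF H1 H2] by blast
    define U0 where "U0 = (SOME U. good E e c U)"
    have g: "good E e c U0" unfolding U0_def using H5 by (rule someI_ex)
    have sp0: "sp E e c = {i. U0 i \<noteq> S}" unfolding sp_def U0_def by (simp only: if_P[OF H5])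
    have "E \<in> {E. finite E \<and> E \<subseteq> Ms n}" using H1 n by blast
    then have "sp E e c \<subseteq> (\<Union>E\<in>{E. finite E \<and> E \<subseteq> Ms n}. \<Union>e\<in>PiE E (\<lambda>_. D). \<Union>c\<in>\<rat>. sp E e c)"
      using H3 H4 by blast
    then have "sp E e c \<subseteq> Ms (Suc n)" unfolding MsS nx_def by blast
    then have "{i. U0 i \<noteq> S} \<subseteq> M" unfolding sp0 M_def by blast
    then show "\<exists>U. good E e c U \<and> {i. U i \<noteq> S} \<subseteq> M" using g by blast
  qed
qed



lemma main_aux:
  fixes X :: "'a topology" and f :: "'g::ab_group_add \<Rightarrow> 'a" and h :: "('g \<Rightarrow> 'a) \<Rightarrow> real"
  assumes K: "korovin_mapping X f"
    and hc: "continuous_map (subtopology (power_top X) (orbit f)) euclideanreal h"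
    and D: "countable D" "D \<subseteq> topspace X" "X closure_of D = topspace X"
    and R: "R_rigid X"
    and pq: "p \<in> orbit f" "q \<in> orbit f"
  shows "h p = h q"
proof -
  have inT: "z j \<in> topspace X" if "z \<in> orbit f" for z j using orbit_top[OF K that] .
  define good where "good E e c U \<longleftrightarrow> (\<forall>i. openin X (U i)) \<and> finite {i. U i \<noteq> topspace X} \<and> (\<forall>i. U i \<noteq> {})
     \<and> (\<forall>i\<in>E. e i \<in> U i) \<and> (\<forall>z\<in>orbit f. (\<forall>i. z i \<in> U i) \<longrightarrow> h z < c)" for E e c U
  have "\<exists>M. countable M \<and> (\<forall>E e c. finite E \<and> E \<subseteq> M \<and> e \<in> PiE E (\<lambda>_. D) \<and> c \<in> \<rat>
      \<and> (\<exists>U. good E e c U) \<longrightarrow> (\<exists>U. good E e c U \<and> {i. U i \<noteq> topspace X} \<subseteq> M))"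
  proof (rule construct_M[of D good "topspace X"])
    show "countable D" by (rule D(1))
    show "finite {i. U i \<noteq> topspace X}" if "good E e c U" for E e c U using that unfolding good_def by blast
  qed
  then obtain M where cM: "countable M" and MP0: "\<forall>E e c. finite E \<and> E \<subseteq> M \<and> e \<in> PiE E (\<lambda>_. D) \<and> c \<in> \<rat>
      \<and> (\<exists>U. good E e c U) \<longrightarrow> (\<exists>U. good E e c U \<and> {i. U i \<noteq> topspace X} \<subseteq> M)"
    by (elim exE conjE)
  have MP: "\<exists>U. good E e c U \<and> {i. U i \<noteq> topspace X} \<subseteq> M"
    if "finite E" "E \<subseteq> M" "e \<in> PiE E (\<lambda>_. D)" "c \<in> \<rat>" "good E e c U0" for E e c U0
    using MP0 that by blast
  have ext: "\<exists>z\<in>orbit f. \<forall>j\<in>A. z j = u j" if "countable A" "\<And>j. j \<in> A \<Longrightarrow> u j \<in> topspace X" for A u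
    using orbit_ext[OF K that] .
  have box: "\<exists>U. (\<forall>i. openin X (U i)) \<and> finite {i. U i \<noteq> topspace X} \<and> (\<forall>i. y i \<in> U i)
     \<and> (\<forall>z\<in>orbit f. (\<forall>i. z i \<in> U i) \<longrightarrow> h z \<in> W)" if "y \<in> orbit f" "open W" "h y \<in> W" for y W
    using nbhd_box[OF K hc that] .
  have lt: "\<not> h y < h y'" if yY: "y \<in> orbit f" "y' \<in> orbit f" and agree: "\<forall>j\<in>M. y j = y' j" for y y'
  proof
    assume "h y < h y'"
    then obtain c where c: "c \<in> \<rat>" "h y < c" "c < h y'" using Rats_dense_in_real by blast
    obtain B where B: "\<forall>i. openin X (B i)" "finite {i. B i \<noteq> topspace X}" "\<forall>i. y i \<in> B i"
        "\<forall>z\<in>orbit f. (\<forall>i. z i \<in> B i) \<longrightarrow> h z \<in> {..<c}"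
      using box[OF yY(1), of "{..<c}"] c by auto
    obtain B' where B': "\<forall>i. openin X (B' i)" "finite {i. B' i \<noteq> topspace X}" "\<forall>i. y' i \<in> B' i"
        "\<forall>z\<in>orbit f. (\<forall>i. z i \<in> B' i) \<longrightarrow> h z \<in> {c<..}"
      using box[OF yY(2), of "{c<..}"] c by auto
    define E where "E = M \<inter> {i. B' i \<noteq> topspace X}"
    have finE: "finite E" unfolding E_def using B'(2) by simp
    have exd: "\<exists>d. d \<in> D \<and> d \<in> B i \<inter> B' i" if "i \<in> E" for i
    proof -
      have "i \<in> M" using that unfolding E_def by blast
      then have "y i = y' i" using agree by blast
      then have "y i \<in> B i \<inter> B' i" using B(3) B'(3) by (metis IntI)
      moreover have "openin X (B i \<inter> B' i)" using B(1) B'(1) by auto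
      ultimately show ?thesis using dense_pt[OF D, of "B i \<inter> B' i"] by blast
    qed
    define e where "e i = (SOME d. d \<in> D \<and> d \<in> B i \<inter> B' i)" for i
    have e: "e i \<in> D" "e i \<in> B i" "e i \<in> B' i" if "i \<in> E" for i
      using someI_ex[OF exd[OF that]] unfolding e_def by auto
    define e' where "e' = restrict e E"
    have e'D: "e' \<in> PiE E (\<lambda>_. D)" unfolding e'_def using e by auto
    have "good E e' c B" unfolding good_def
      using B e unfolding e'_def by auto
    then obtain W where W: "good E e' c W" and WM: "{i. W i \<noteq> topspace X} \<subseteq> M"
      using MP[OF finE _ e'D c(1)] unfolding E_def by blast
    have Wo: "\<And>i. openin X (W i)" and Wf: "finite {i. W i \<noteq> topspace X}" and Wne: "\<And>i. W i \<noteq> {}"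
      and We: "\<And>i. i \<in> E \<Longrightarrow> e' i \<in> W i" and Wh: "\<And>z. z \<in> orbit f \<Longrightarrow> (\<forall>i. z i \<in> W i) \<Longrightarrow> h z < c"
      using W unfolding good_def by auto
    have WT: "W i \<subseteq> topspace X" for i using Wo openin_subset by blast
    define u where "u i = (if i \<in> E then e i else if W i \<noteq> topspace X then (SOME x. x \<in> W i) else y' i)" for i
    have sW: "(SOME x. x \<in> W i) \<in> W i" for i using Wne[of i] by (simp add: some_in_eq)
    have uT: "u j \<in> topspace X" for j
      using e(1)[of j] D(2) sW[of j] WT[of j] inT[OF yY(2)] unfolding u_def by auto
    obtain z where z: "z \<in> orbit f" "\<forall>j\<in>{i. W i \<noteq> topspace X} \<union> {i. B' i \<noteq> topspace X}. z j = u j"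
      using ext[of "{i. W i \<noteq> topspace X} \<union> {i. B' i \<noteq> topspace X}" u] uT Wf B'(2)
      by (meson countable_Un countable_finite)
    have "z i \<in> W i" for i
    proof (cases "W i = topspace X")
      case True then show ?thesis using inT[OF z(1)] by simp
    next
      case False
      then have "z i = u i" using z(2) by auto
      then show ?thesis using False We[of i] sW[of i] unfolding u_def e'_def by (auto split: if_splits)
    qed
    then have "h z < c" using Wh z(1) by blast
    moreover have "z i \<in> B' i" for i
    proof (cases "B' i = topspace X")
      case True then show ?thesis using inT[OF z(1)] by simp
    next
      case False
      then have zu: "z i = u i" using z(2) by auto
      show ?thesis
      proof (cases "i \<in> E")
        case True then show ?thesis using zu e(3) unfolding u_def by simp
      next
        case nE: False
        then have "i \<notin> M" using False unfolding E_def by auto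
        then have "W i = topspace X" using WM by blast
        then show ?thesis using zu nE B'(3) unfolding u_def by simp
      qed
    qed
    then have "h z > c" using B'(4) z(1) by auto
    ultimately show False by simp
  qed
  have dep: "h y = h y'" if "y \<in> orbit f" "y' \<in> orbit f" "\<forall>j\<in>M. y j = y' j" for y y'
    using lt[OF that] lt[of y' y] that by force
  have single: "\<exists>y'\<in>orbit f. (\<forall>j\<in>M. y' j = (y(i:=x)) j) \<and> h y' = h y"
    if yY: "y \<in> orbit f" and xT: "x \<in> topspace X" for y i x
  proof (cases "i \<in> M")
    case False
    then have "\<forall>j\<in>M. y j = (y(i:=x)) j" by auto
    then show ?thesis using yY by blast
  next
    case iM: True
    have exs: "\<exists>y'\<in>orbit f. \<forall>j\<in>M. y' j = (y(i:=x')) j" if "x' \<in> topspace X" for x'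
      using ext[OF cM, of "y(i:=x')"] inT[OF yY] that by auto
    define sel where "sel x' = (SOME y'. y' \<in> orbit f \<and> (\<forall>j\<in>M. y' j = (y(i:=x')) j))" for x'
    have sel: "sel x' \<in> orbit f" "\<forall>j\<in>M. sel x' j = (y(i:=x')) j" if "x' \<in> topspace X" for x'
      using someI_ex[OF exs[OF that, unfolded Bex_def]] unfolding sel_def by auto
    define \<phi> where "\<phi> x' = h (sel x')" for x'
    have \<phi>prop: "\<phi> x' = h y'" if "x' \<in> topspace X" "y' \<in> orbit f" "\<forall>j\<in>M. y' j = (y(i:=x')) j" for x' y'
      unfolding \<phi>_def using dep[OF sel(1)[OF that(1)] that(2)] sel(2)[OF that(1)] that(3) by auto
    have cont: "continuous_map X euclideanreal \<phi>"
      unfolding continuous_map_def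
    proof (intro conjI allI impI)
      show "\<phi> \<in> topspace X \<rightarrow> topspace euclideanreal" by simp
      fix W :: "real set" assume "openin euclideanreal W"
      then have oW: "open W" using open_openin by blast
      show "openin X {x \<in> topspace X. \<phi> x \<in> W}"
      proof (subst openin_subopen, intro ballI)
        fix x0 assume x0: "x0 \<in> {x \<in> topspace X. \<phi> x \<in> W}"
        define y0 where "y0 = sel x0"
        have y0: "y0 \<in> orbit f" "\<forall>j\<in>M. y0 j = (y(i:=x0)) j" using sel x0 unfolding y0_def by auto
        have "h y0 \<in> W" using x0 unfolding \<phi>_def y0_def by simp
        then obtain B where B: "\<forall>i. openin X (B i)" "finite {i. B i \<noteq> topspace X}" "\<forall>i. y0 i \<in> B i"
          "\<forall>z\<in>orbit f. (\<forall>i. z i \<in> B i) \<longrightarrow> h z \<in> W"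
          using box[OF y0(1) oW] by blast
        have "B i \<subseteq> {x \<in> topspace X. \<phi> x \<in> W}"
        proof
          fix x' assume x': "x' \<in> B i"
          then have x'T: "x' \<in> topspace X" using B(1) openin_subset by blast
          define u where "u j = (if j \<in> M then (y(i:=x')) j else y0 j)" for j
          have uT: "u j \<in> topspace X" for j using inT[OF yY] inT[OF y0(1)] x'T unfolding u_def by auto
          obtain z where z: "z \<in> orbit f" "\<forall>j\<in>M \<union> {j. B j \<noteq> topspace X}. z j = u j"
            using ext[of "M \<union> {j. B j \<noteq> topspace X}" u] uT cM B(2)
            by (meson countable_Un countable_finite)
          have zM: "\<forall>j\<in>M. z j = (y(i:=x')) j" using z(2) unfolding u_def by auto
          have "z j \<in> B j" for j
          proof (cases "j \<in> M")
            case True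
            show ?thesis
            proof (cases "j = i")
              case True then show ?thesis using zM iM x' by simp
            next
              case False
              then have "z j = y0 j" using zM y0(2) \<open>j \<in> M\<close> by simp
              then show ?thesis using B(3) by simp
            qed
          next
            case False
            show ?thesis
            proof (cases "B j = topspace X")
              case True then show ?thesis using inT[OF z(1)] by simp
            next
              case F2: False
              then have "z j = y0 j" using z(2) False unfolding u_def by auto
              then show ?thesis using B(3) by simp
            qed
          qed
          then have "h z \<in> W" using B(4) z(1) by blast
          then show "x' \<in> {x \<in> topspace X. \<phi> x \<in> W}" using \<phi>prop[OF x'T z(1) zM] x'T by simp
        qed
        moreover have "x0 \<in> B i" using y0(2) iM B(3) by (metis fun_upd_same)
        ultimately show "\<exists>T. openin X T \<and> x0 \<in> T \<and> T \<subseteq> {x \<in> topspace X. \<phi> x \<in> W}"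
          using B(1) by blast
      qed
    qed
    have "\<phi> x = \<phi> (y i)" using R cont xT inT[OF yY] unfolding R_rigid_def by blast
    moreover have "\<phi> (y i) = h y" using \<phi>prop[OF inT[OF yY] yY] by simp
    moreover have "\<phi> x = h (sel x)" unfolding \<phi>_def by simp
    ultimately show ?thesis using sel[OF xT] by metis
  qed
  have fmod: "\<forall>y\<in>orbit f. \<forall>v. (\<forall>j\<in>F. v j \<in> topspace X) \<longrightarrow>
      (\<exists>y'\<in>orbit f. (\<forall>j\<in>M. y' j = (if j \<in> F then v j else y j)) \<and> h y' = h y)" if "finite F" for F
    using that
  proof (induction F rule: finite_induct)
    case empty then show ?case by auto
  next
    case (insert a F)
    show ?case
    proof (intro ballI allI impI)
      fix y v assume yY: "y \<in> orbit f" and v: "\<forall>j\<in>insert a F. v j \<in> topspace X"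
      have vF: "\<forall>j\<in>F. v j \<in> topspace X" using v by blast
      obtain y1 where y1: "y1 \<in> orbit f" "\<forall>j\<in>M. y1 j = (if j \<in> F then v j else y j)" "h y1 = h y"
        using insert.IH[rule_format, OF yY] vF by blast
      obtain y2 where y2: "y2 \<in> orbit f" "\<forall>j\<in>M. y2 j = (y1(a:=v a)) j" "h y2 = h y1"
        using single[OF y1(1), of "v a" a] v by auto
      have "\<forall>j\<in>M. y2 j = (if j \<in> insert a F then v j else y j)" using y1(2) y2(2) by auto
      then show "\<exists>y'\<in>orbit f. (\<forall>j\<in>M. y' j = (if j \<in> insert a F then v j else y j)) \<and> h y' = h y"
        using y2(1,3) y1(3) by (metis (no_types, lifting))
    qed
  qed
  show ?thesis
  proof (rule ccontr)
    assume ne: "h p \<noteq> h q"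
    have oW: "open (- {h p})" by (simp add: open_Compl)
    obtain B where B: "\<forall>i. openin X (B i)" "finite {i. B i \<noteq> topspace X}" "\<forall>i. q i \<in> B i"
      "\<forall>z\<in>orbit f. (\<forall>i. z i \<in> B i) \<longrightarrow> h z \<in> - {h p}"
      using box[OF pq(2) oW] ne by auto
    define F where "F = {i. B i \<noteq> topspace X}"
    obtain y1 where y1: "y1 \<in> orbit f" "\<forall>j\<in>M. y1 j = (if j \<in> F then q j else p j)" "h y1 = h p"
      using fmod[of F] B(2) pq inT[OF pq(2)] unfolding F_def by blast
    define u where "u j = (if j \<in> F then q j else y1 j)" for j
    have uT: "u j \<in> topspace X" for j using inT[OF pq(2)] inT[OF y1(1)] unfolding u_def by auto
    obtain z where z: "z \<in> orbit f" "\<forall>j\<in>M \<union> F. z j = u j"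
      using ext[of "M \<union> F" u] uT cM B(2) unfolding F_def
      by (meson countable_Un countable_finite)
    have "\<forall>j\<in>M. z j = y1 j" using z(2) y1(2) unfolding u_def by auto
    then have "h z = h y1" using dep[OF z(1) y1(1)] by simp
    moreover have "z j \<in> B j" for j
    proof (cases "j \<in> F")
      case True then show ?thesis using z(2) B(3) unfolding u_def by auto
    next
      case False then show ?thesis using inT[OF z(1)] unfolding F_def by auto
    qed
    then have "h z \<noteq> h p" using B(4) z(1) by auto
    ultimately show False using y1(3) by simp
  qed
qed


theorem corollary4p8:
  fixes X :: "'a topology" and f :: "'g::ab_group_add \<Rightarrow> 'a"
  assumes "separable_space X" and "R_rigid X"
    and "\<exists>a\<in>topspace X. \<exists>b\<in>topspace X. a \<noteq> b"
    and "infinite (UNIV :: 'g set)"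
    and "korovin_mapping X f"
  shows "R_rigid (subtopology (power_top X) (orbit f))"
proof -
  obtain D where D: "countable D" "D \<subseteq> topspace X" "X closure_of D = topspace X"
    using assms(1) unfolding separable_space_def by blast
  show ?thesis
    unfolding R_rigid_def
  proof (intro allI impI ballI)
    fix h p q
    assume hc: "continuous_map (subtopology (power_top X) (orbit f)) euclideanreal h"
      and p: "p \<in> topspace (subtopology (power_top X) (orbit f))"
      and q: "q \<in> topspace (subtopology (power_top X) (orbit f))"
    have "p \<in> orbit f" "q \<in> orbit f" using p q by auto
    then show "h p = h q" using main_aux[OF assms(5) hc D assms(2)] by blast
  qed
qed

end
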